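(* For every integer $m\ge 3$, the matrix $M_m$ defined below is $3$-decodable (whatever maximizing index $i$ is chosen at each step of the recursion).
   Context: Binary matrices $M_m$ with $m$ rows are defined recursively; write $c(\ell)$ for the number of columns of $M_\ell$, $I_3$ for the $3\times 3$ identity matrix. Let $M_3=[\,I_3\mid \mathbf{1}\,]$ ($3\times 4$, $\mathbf{1}$ the all-ones column). Let $M_4=\begin{bmatrix}\mathbf{0}_{1\times 3} & \mathbf{1}_{1\times 4}\\ I_3 & M_3\end{bmatrix}$ ($4\times 7$). For $m\ge 5$, choose $i\in\{2,\dots,m-3\}$ maximizing $i\cdot c(m-i)$, put $c=c(m-i)$, and let $M_m=[\,L\mid R\,]$, where $L$ is the $m\times 3$ matrix whose first $m-3$ rows are zero and whose last $3$ rows form $I_3$, and $R$ is the $m\times ic$ matrix whose first $i$ rows are such that row $r$ ($1\le r\le i$) has ones exactly in columns $(r-1)c+1,\dots,rc$, and whose last $m-i$ rows form $[\,M_{m-i}\ M_{m-i}\ \cdots\ M_{m-i}\,]$ ($i$ copies side by side). For a binary matrix $M$ and a nonempty set $S$ of its columns, $S$ is a stopping set if the submatrix formed by $S$ has no row with exactly one $1$; $s(M)$ is the minimum size of a stopping set ($+\infty$ if none); $M$ is $d$-decodable if $s(M)\ge d+1$. *)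

theory Defs
  imports Main "HOL-Library.Extended_Nat"
begin

text \<open>Binary matrices are represented as functions A :: nat => nat => bool
  (entry in row r, column j, both 0-indexed), together with explicit numbers of rows
  and columns. Entries outside the range are irrelevant.\<close>

text \<open>Number of columns c(m) of M_m. It does not depend on which maximizing index is
  chosen, since c(m) = 3 + max_{2 <= i <= m-3} i * c(m-i).\<close>
function ncols :: "nat \<Rightarrow> nat" where
  "ncols m = (if m < 3 then 0 else if m = 3 then 4 else if m = 4 then 7
              else 3 + Max ((\<lambda>i. i * ncols (m - i)) ` {2..m-3}))"
  by auto
termination
  by (relation "measure id") auto

declare ncols.simps[simp del]

definition valid_choice :: "(nat \<Rightarrow> nat) \<Rightarrow> bool" where
  "valid_choice ch \<longleftrightarrow> (\<forall>m\<ge>5. ch m \<in> {2..m-3} \<and>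
      (\<forall>i\<in>{2..m-3}. i * ncols (m - i) \<le> ch m * ncols (m - ch m)))"

text \<open>The index actually used (clamped for termination; equal to ch m for valid choices).\<close>
definition idx :: "(nat \<Rightarrow> nat) \<Rightarrow> nat \<Rightarrow> nat" where
  "idx ch m = (if ch m \<in> {2..m-3} then ch m else 2)"

text \<open>The matrix M_m (for the index choice ch), 0-indexed: Mmat ch m r j is the entry
  in row r < m and column j < ncols m.\<close>
function Mmat :: "(nat \<Rightarrow> nat) \<Rightarrow> nat \<Rightarrow> nat \<Rightarrow> nat \<Rightarrow> bool" where
  "Mmat ch m r j =
     (if m < 3 then False
      else if m = 3 then (j = r \<or> j = 3)
      else if m = 4 then
        (if r = 0 then 3 \<le> j
         else if j < 3 then j = r - 1 else Mmat ch 3 (r - 1) (j - 3))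
      else
        (let i = idx ch m; c = ncols (m - i) in
         if j < 3 then (m - 3 \<le> r \<and> j = r - (m - 3))
         else if r < i then (j - 3) div c = r
         else Mmat ch (m - i) (r - i) ((j - 3) mod c)))"
  by auto
termination
  by (relation "measure (\<lambda>(ch, m, r, j). m)") (auto simp: idx_def Let_def)

declare Mmat.simps[simp del]

definition stopping_set :: "nat \<Rightarrow> nat \<Rightarrow> (nat \<Rightarrow> nat \<Rightarrow> bool) \<Rightarrow> nat set \<Rightarrow> bool" where
  "stopping_set rows cols A S \<longleftrightarrow> S \<subseteq> {..<cols} \<and> S \<noteq> {} \<and>
      (\<forall>r<rows. card {j \<in> S. A r j} \<noteq> 1)"

text \<open>s(M): minimum size of a stopping set, infinity if none.\<close>
definition stop_dist :: "nat \<Rightarrow> nat \<Rightarrow> (nat \<Rightarrow> nat \<Rightarrow> bool) \<Rightarrow> enat" where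
  "stop_dist rows cols A = Inf ((\<lambda>S. enat (card S)) ` {S. stopping_set rows cols A S})"

definition decodable :: "nat \<Rightarrow> nat \<Rightarrow> nat \<Rightarrow> (nat \<Rightarrow> nat \<Rightarrow> bool) \<Rightarrow> bool" where
  "decodable d rows cols A \<longleftrightarrow> stop_dist rows cols A \<ge> enat (d + 1)"

end

theory Submission
  imports Defs
begin

definition stepM :: "nat \<Rightarrow> nat \<Rightarrow> nat \<Rightarrow> (nat\<Rightarrow>nat\<Rightarrow>bool) \<Rightarrow> nat \<Rightarrow> nat \<Rightarrow> bool" where
  "stepM m i c B r j = (if j < 3 then (m - 3 \<le> r \<and> j = r - (m - 3))
      else if r < i then (j - 3) div c = r else B (r - i) ((j - 3) mod c))"

definition Dp :: "nat \<Rightarrow> nat \<Rightarrow> (nat\<Rightarrow>nat\<Rightarrow>bool) \<Rightarrow> bool" where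
  "Dp n k A = (\<forall>a b \<rho>. a < k \<longrightarrow> b < k \<longrightarrow> a \<noteq> b \<longrightarrow> n - 3 \<le> \<rho> \<longrightarrow>
       (\<exists>r<n. r \<noteq> \<rho> \<and> A r a \<noteq> A r b))"

definition Qp :: "nat \<Rightarrow> nat \<Rightarrow> (nat\<Rightarrow>nat\<Rightarrow>bool) \<Rightarrow> bool" where
  "Qp n k A = (\<forall>S. S \<subseteq> {..<k} \<longrightarrow> S \<noteq> {} \<longrightarrow> card S \<le> 3 \<longrightarrow>
       (\<exists>r<n. card {j\<in>S. A r j} = 1))"

lemma div_lt: fixes j i c :: nat assumes "3 \<le> j" "j < 3 + i*c" "0 < c" shows "(j-3) div c < i"
  using assms by (simp add: div_less_iff_less_mult mult.commute)

lemma same_col: fixes a b c :: nat assumes "3 \<le> a" "3 \<le> b" "(a-3) div c = (b-3) div c" "(a-3) mod c = (b-3) mod c"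
  shows "a = b"
proof -
  have "a - 3 = b - 3" using assms(3,4) by (metis div_mult_mod_eq)
  then show ?thesis using assms(1,2) by simp
qed

lemma D_step:
  assumes "1 \<le> i" "3 \<le> n" "m = n + i" "0 < c" "Dp n c B"
  shows "Dp m (3+i*c) (stepM m i c B)"
  unfolding Dp_def
proof (intro allI impI)
  fix a b \<rho> assume a: "a < 3+i*c" and b: "b<3+i*c" and ab: "a\<noteq>b" and \<rho>: "m-3 \<le> \<rho>"
  have im: "i \<le> m - 3" using assms by simp
  show "\<exists>r<m. r\<noteq>\<rho> \<and> stepM m i c B r a \<noteq> stepM m i c B r b"
  proof (cases "a < 3")
    case a3: True
    show ?thesis
    proof (cases "b < 3")
      case True
      show ?thesis
      proof (cases "m - 3 + a = \<rho>")
        case True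
        then show ?thesis using a3 \<open>b<3\<close> ab assms
          by (intro exI[of _ "m-3+b"]) (auto simp: stepM_def)
      next
        case False
        then show ?thesis using a3 \<open>b<3\<close> ab assms
          by (intro exI[of _ "m-3+a"]) (auto simp: stepM_def)
      qed
    next
      case False
      have "(b-3) div c < i" using div_lt[of b i c] False b assms by simp
      then show ?thesis using a3 False im \<rho>
        by (intro exI[of _ "(b-3) div c"]) (auto simp: stepM_def)
    qed
  next
    case a3: False
    have da: "(a-3) div c < i" using div_lt[of a i c] a3 a assms by simp
    show ?thesis
    proof (cases "b < 3")
      case True
      then show ?thesis using a3 da im \<rho>
        by (intro exI[of _ "(a-3) div c"]) (auto simp: stepM_def)
    next
      case b3: False
      have db: "(b-3) div c < i" using div_lt[of b i c] b3 b assms by simp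
      show ?thesis
      proof (cases "(a-3) div c = (b-3) div c")
        case False
        then show ?thesis using a3 b3 da im \<rho>
          by (intro exI[of _ "(a-3) div c"]) (auto simp: stepM_def)
      next
        case True
        then have md: "(a-3) mod c \<noteq> (b-3) mod c" using same_col[of a b c] a3 b3 ab by auto
        have "n - 3 \<le> \<rho> - i" using \<rho> assms by simp
        then obtain r' where r': "r' < n" "r' \<noteq> \<rho> - i"
          "B r' ((a-3) mod c) \<noteq> B r' ((b-3) mod c)"
          using assms(5) md assms(4) unfolding Dp_def
          by (meson mod_less_divisor)
        show ?thesis using r' a3 b3 assms \<rho>
          by (intro exI[of _ "r'+i"]) (auto simp: stepM_def)
      qed
    qed
  qed
qed

lemma Q_step:
  assumes "1 \<le> i" "3 \<le> n" "m = n + i" "0 < c" "Qp n c B"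
    and D: "Dp m (3+i*c) (stepM m i c B)"
  shows "Qp m (3+i*c) (stepM m i c B)"
  unfolding Qp_def
proof (intro allI impI)
  fix S assume S: "S \<subseteq> {..<3+i*c}" and Sne: "S \<noteq> {}" and Sc: "card S \<le> 3"
  let ?A = "stepM m i c B"
  have fin: "finite S" using S finite_subset by blast
  have im: "i \<le> m - 3" using assms by simp
  have rowblk: "{j\<in>S. ?A b' j} = {j\<in>S. 3 \<le> j \<and> (j-3) div c = b'}" if "b' < i" for b'
    using that im by (auto simp: stepM_def)
  show "\<exists>r<m. card {j\<in>S. ?A r j} = 1"
  proof (cases "S \<subseteq> {..<3}")
    case True
    obtain x where x: "x \<in> S" using Sne by blast
    have "{j\<in>S. ?A (m-3+x) j} = {x}" using True x by (auto simp: stepM_def)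
    moreover have "m - 3 + x < m" using True x assms by auto
    ultimately show ?thesis by (intro exI[of _ "m-3+x"]) auto
  next
    case False
    then obtain x where x: "x \<in> S" "3 \<le> x" by force
    define b where "b = (x-3) div c"
    have bi: "b < i" unfolding b_def using div_lt[of x i c] x S assms by auto
    define T where "T = {j\<in>S. 3 \<le> j \<and> (j-3) div c = b}"
    have TS: "T \<subseteq> S" unfolding T_def by auto
    have finT: "finite T" using fin TS finite_subset by blast
    have xT: "x \<in> T" unfolding T_def b_def using x by auto
    show ?thesis
    proof (cases "card T = 1")
      case True
      then show ?thesis using rowblk[OF bi] bi im assms unfolding T_def
        by (intro exI[of _ b]) auto
    next
      case False
      have cT: "card T \<ge> 2" using False xT finT
      proof -
        have "card T > 0" using finT xT card_gt_0_iff by blast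
        then show ?thesis using False by linarith
      qed
      show ?thesis
      proof (cases "S = T")
        case True
        define f where "f j = (j-3) mod c" for j
        have inj: "inj_on f T"
          unfolding inj_on_def f_def T_def using same_col[of _ _ c] by auto
        have "f ` T \<subseteq> {..<c}" unfolding f_def using assms(4) by auto
        moreover have "f ` T \<noteq> {}" using xT by auto
        moreover have "card (f ` T) \<le> 3" using card_image[OF inj] Sc True by simp
        ultimately obtain r' where r': "r' < n" "card {j'\<in>f ` T. B r' j'} = 1"
          using assms(5) unfolding Qp_def by blast
        have S3: "\<forall>j\<in>S. 3 \<le> j \<and> (j-3) div c = b"
        proof
          fix j assume "j \<in> S" then have "j \<in> T" using True by simp
          then show "3 \<le> j \<and> (j-3) div c = b" unfolding T_def by simp
        qed
        have e1: "{j\<in>S. ?A (r'+i) j} = {j\<in>T. B r' (f j)}"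
        proof (rule set_eqI)
          fix j
          show "j \<in> {j\<in>S. ?A (r'+i) j} \<longleftrightarrow> j \<in> {j\<in>T. B r' (f j)}"
          proof (cases "j \<in> S")
            case True
            then have "3 \<le> j" using S3 by blast
            then have "?A (r'+i) j = B r' (f j)" unfolding f_def stepM_def by simp
            then show ?thesis using True \<open>S = T\<close> by simp
          next
            case False
            then show ?thesis using \<open>S = T\<close> by simp
          qed
        qed
        have e2: "f ` {j\<in>T. B r' (f j)} = {j'\<in>f ` T. B r' j'}" by auto
        have "card {j\<in>T. B r' (f j)} = 1"
          using card_image[OF inj_on_subset[OF inj, of "{j\<in>T. B r' (f j)}"]] e2 r'(2) by auto
        then show ?thesis using e1 r' assms by (intro exI[of _ "r'+i"]) auto
      next
        case False
        then obtain y where y: "y \<in> S" "y \<notin> T" using TS by blast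
        have "card (insert y T) \<le> card S" using y TS fin by (intro card_mono) auto
        then have cTy: "card (insert y T) = card T + 1" "card T = 2" using y finT cT Sc by auto
        have sub: "insert y T \<subseteq> S" using y TS by blast
        have "card (insert y T) = card S" using cTy Sc \<open>card (insert y T) \<le> card S\<close> by linarith
        then have SyT: "S = insert y T" using card_subset_eq[OF fin sub] by simp
        show ?thesis
        proof (cases "y < 3")
          case False
          define b' where "b' = (y-3) div c"
          have bi': "b' < i" unfolding b'_def using div_lt[of y i c] False y S assms by auto
          have "b' \<noteq> b" using y False unfolding T_def b'_def by auto
          then have "{j\<in>S. 3 \<le> j \<and> (j-3) div c = b'} = {y}"
            using SyT False unfolding T_def b'_def by auto
          then show ?thesis using rowblk[OF bi'] bi' im assms
            by (intro exI[of _ b']) auto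
        next
          case True
          obtain a a2 where aa: "T = {a, a2}" "a \<noteq> a2" using cTy(2) card_2_iff by metis
          have ab: "a < 3+i*c" "a2 < 3+i*c" using aa TS S by auto
          obtain r where r: "r < m" "r \<noteq> m - 3 + y" "?A r a \<noteq> ?A r a2"
            using D ab aa(2) unfolding Dp_def by (meson le_add1)
          have "\<not> ?A r y" using True r(2) by (auto simp: stepM_def)
          then have "{j\<in>S. ?A r j} = {j\<in>{a,a2}. ?A r j}" using SyT aa by auto
          also have "card \<dots> = 1"
          proof (cases "?A r a")
            case True
            then have "{j\<in>{a,a2}. ?A r j} = {a}" using r(3) by auto
            then show ?thesis by simp
          next
            case False
            then have "{j\<in>{a,a2}. ?A r j} = {a2}" using r(3) by auto
            then show ?thesis by simp
          qed
          finally show ?thesis using r by blast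
        qed
      qed
    qed
  qed
qed

lemma Dp_cong: assumes "\<And>r j. r < n \<Longrightarrow> j < k \<Longrightarrow> A r j = A' r j"
  shows "Dp n k A = Dp n k A'"
proof -
  have "(\<exists>r<n. r \<noteq> \<rho> \<and> A r a \<noteq> A r b) = (\<exists>r<n. r \<noteq> \<rho> \<and> A' r a \<noteq> A' r b)"
    if "a < k" "b < k" for a b \<rho> using that assms by auto
  then show ?thesis unfolding Dp_def by blast
qed

lemma Qp_cong: assumes "\<And>r j. r < n \<Longrightarrow> j < k \<Longrightarrow> A r j = A' r j"
  shows "Qp n k A = Qp n k A'"
proof -
  have eq: "{j\<in>S. A r j} = {j\<in>S. A' r j}" if "S \<subseteq> {..<k}" "r < n" for S r
    using that assms by auto
  show ?thesis unfolding Qp_def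
  proof (intro iffI allI impI)
    fix S assume H: "\<forall>S. S \<subseteq> {..<k} \<longrightarrow> S \<noteq> {} \<longrightarrow> card S \<le> 3 \<longrightarrow> (\<exists>r<n. card {j\<in>S. A r j} = 1)"
      and S: "S \<subseteq> {..<k}" "S \<noteq> {}" "card S \<le> 3"
    then obtain r where r: "r < n" "card {j\<in>S. A r j} = 1" by blast
    then show "\<exists>r<n. card {j\<in>S. A' r j} = 1" using eq[OF S(1) r(1)] by auto
  next
    fix S assume H: "\<forall>S. S \<subseteq> {..<k} \<longrightarrow> S \<noteq> {} \<longrightarrow> card S \<le> 3 \<longrightarrow> (\<exists>r<n. card {j\<in>S. A' r j} = 1)"
      and S: "S \<subseteq> {..<k}" "S \<noteq> {}" "card S \<le> 3"
    then obtain r where r: "r < n" "card {j\<in>S. A' r j} = 1" by blast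
    then show "\<exists>r<n. card {j\<in>S. A r j} = 1" using eq[OF S(1) r(1)] by auto
  qed
qed

lemma ncols_ge: "3 \<le> n \<Longrightarrow> 3 \<le> ncols n"
  by (subst ncols.simps) auto

lemma ncols3: "ncols 3 = 4" by (subst ncols.simps) simp
lemma ncols4: "ncols 4 = 7" by (subst ncols.simps) simp

lemma ncols_step: assumes "valid_choice ch" "5 \<le> m"
  shows "ncols m = 3 + ch m * ncols (m - ch m)"
proof -
  have v: "ch m \<in> {2..m-3}" "\<forall>i\<in>{2..m-3}. i * ncols (m - i) \<le> ch m * ncols (m - ch m)"
    using assms unfolding valid_choice_def by auto
  have "Max ((\<lambda>i. i * ncols (m - i)) ` {2..m-3}) = ch m * ncols (m - ch m)"
    using v by (intro Max_eqI) auto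
  then show ?thesis using assms(2) by (subst ncols.simps) simp
qed

lemma idx_eq: "valid_choice ch \<Longrightarrow> 5 \<le> m \<Longrightarrow> idx ch m = ch m"
  unfolding valid_choice_def idx_def by auto

lemma idx_range: "5 \<le> m \<Longrightarrow> idx ch m \<in> {2..m-3}"
  unfolding idx_def by auto

lemma Mmat_step: "5 \<le> m \<Longrightarrow>
   Mmat ch m r j = stepM m (idx ch m) (ncols (m - idx ch m)) (Mmat ch (m - idx ch m)) r j"
  by (subst Mmat.simps) (simp add: Let_def stepM_def)

lemma Mmat3: "Mmat ch 3 r j = (j = r \<or> j = 3)"
  by (subst Mmat.simps) simp

lemma Mmat3': "Mmat ch 3 = (\<lambda>r j. j = r \<or> j = 3)"
  by (intro ext) (rule Mmat3)

lemma Mmat4: "r < 4 \<Longrightarrow> j < 7 \<Longrightarrow> Mmat ch 4 r j = stepM 4 1 4 (Mmat ch 3) r j"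
  by (subst Mmat.simps) (auto simp: stepM_def)

lemma base_D: "Dp 3 4 (\<lambda>r j. j = r \<or> j = 3)"
  unfolding Dp_def
proof (intro allI impI)
  fix a b \<rho> :: nat assume h: "a < 4" "b < 4" "a \<noteq> b" "3 - 3 \<le> \<rho>"
  let ?P = "\<lambda>r. (a = r \<or> a = 3) \<noteq> (b = r \<or> b = 3)"
  have a4: "a = 0 \<or> a = 1 \<or> a = 2 \<or> a = 3" and b4: "b = 0 \<or> b = 1 \<or> b = 2 \<or> b = 3"
    using h by auto
  have D3: "(0 \<noteq> \<rho> \<and> ?P 0) \<or> (1 \<noteq> \<rho> \<and> ?P 1) \<or> (2 \<noteq> \<rho> \<and> ?P 2)"
    using a4 b4 h(3) by (elim disjE) auto
  have "0<(3::nat)" "1<(3::nat)" "2<(3::nat)" by simp_all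
  then show "\<exists>r<3. r \<noteq> \<rho> \<and> (a = r \<or> a = 3) \<noteq> (b = r \<or> b = 3)"
    using D3 by blast
qed

lemma base_Q: "Qp 3 4 (\<lambda>r j. j = r \<or> j = 3)"
  unfolding Qp_def
proof (intro allI impI)
  fix S :: "nat set" assume S: "S \<subseteq> {..<4}" "S \<noteq> {}" "card S \<le> 3"
  show "\<exists>r<3. card {j\<in>S. j = r \<or> j = 3} = 1"
  proof (cases "3 \<in> S")
    case False
    obtain x where x: "x \<in> S" using S by blast
    have x3: "x < 3" using x S False by (cases "x = 3") auto
    have "{j\<in>S. j = x \<or> j = 3} = {x}" using x False by auto
    then show ?thesis using x3 by auto
  next
    case True
    have "\<not> {0,1,2,3} \<subseteq> S"
    proof
      assume "{0,1,2,3} \<subseteq> S"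
      moreover have "finite S" using finite_subset[OF S(1)] by simp
      ultimately have "card {0,1,2,3::nat} \<le> card S" by (intro card_mono)
      then show False using S by simp
    qed
    then obtain r where r: "r \<in> {0,1,2}" "r \<notin> S" using True by blast
    have r3: "r \<noteq> 3" "r < 3" using r(1) by auto
    have "{j\<in>S. j = r \<or> j = 3} = {3}" using r(2) True by blast
    then have "card {j\<in>S. j = r \<or> j = 3} = 1" by simp
    then show ?thesis using r3 by blast
  qed
qed

lemma main: assumes "valid_choice ch"
  shows "3 \<le> m \<Longrightarrow> Dp m (ncols m) (Mmat ch m) \<and> Qp m (ncols m) (Mmat ch m)"
proof (induction m rule: less_induct)
  case (less m)
  consider "m = 3" | "m = 4" | "5 \<le> m" using less.prems by linarith
  then show ?case
  proof cases
    case 1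
    then show ?thesis using base_D base_Q by (simp add: ncols3 Mmat3')
  next
    case 2
    have ih: "Dp 3 4 (Mmat ch 3)" "Qp 3 4 (Mmat ch 3)"
      using base_D base_Q by (simp_all add: Mmat3')
    have d: "Dp 4 (3+1*4) (stepM 4 1 4 (Mmat ch 3))"
      using D_step[of 1 3 4 4 "Mmat ch 3"] ih by simp
    have q: "Qp 4 (3+1*4) (stepM 4 1 4 (Mmat ch 3))"
      using Q_step[of 1 3 4 4 "Mmat ch 3"] ih d by simp
    have eq: "\<And>r j. r < 4 \<Longrightarrow> j < 7 \<Longrightarrow> Mmat ch 4 r j = stepM 4 1 4 (Mmat ch 3) r j"
      by (rule Mmat4)
    show ?thesis using d q Dp_cong[of 4 7, OF eq] Qp_cong[of 4 7, OF eq] 2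
      by (simp add: ncols4)
  next
    case 3
    define i where "i = idx ch m"
    have ir: "i \<in> {2..m-3}" unfolding i_def using idx_range 3 by blast
    define c where "c = ncols (m - i)"
    have mi3: "3 \<le> m - i" using ir 3 by auto
    have "3 \<le> c" unfolding c_def using mi3 by (rule ncols_ge)
    then have c0: "0 < c" by simp
    have ih: "Dp (m-i) c (Mmat ch (m-i))" "Qp (m-i) c (Mmat ch (m-i))"
      using less.IH[of "m-i"] ir unfolding c_def by auto
    have nc: "ncols m = 3 + i*c"
      unfolding i_def c_def using ncols_step[OF assms 3] idx_eq[OF assms 3] by simp
    have d: "Dp m (3+i*c) (stepM m i c (Mmat ch (m-i)))"
      using D_step[of i "m-i" m c "Mmat ch (m-i)"] ih ir c0 by auto
    have q: "Qp m (3+i*c) (stepM m i c (Mmat ch (m-i)))"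
      using Q_step[of i "m-i" m c "Mmat ch (m-i)"] ih ir c0 d by auto
    have eq: "\<And>r j. r < m \<Longrightarrow> j < 3+i*c \<Longrightarrow> Mmat ch m r j = stepM m i c (Mmat ch (m-i)) r j"
      unfolding i_def c_def using Mmat_step[OF 3] by blast
    show ?thesis using d q Dp_cong[of m "3+i*c", OF eq] Qp_cong[of m "3+i*c", OF eq] nc
      by simp
  qed
qed

theorem lemma5p3:
  fixes ch :: "nat \<Rightarrow> nat" and m :: nat
  assumes "valid_choice ch" and "m \<ge> 3"
  shows "decodable 3 m (ncols m) (Mmat ch m)"
proof -
  have Q: "Qp m (ncols m) (Mmat ch m)" using main[OF assms(1) assms(2)] by blast
  have "enat 4 \<le> enat (card S)" if "stopping_set m (ncols m) (Mmat ch m) S" for S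
  proof (rule ccontr)
    assume "\<not> enat 4 \<le> enat (card S)"
    then have "card S \<le> 3" by simp
    have ss: "S \<subseteq> {..<ncols m}" "S \<noteq> {}" "\<forall>r<m. card {j\<in>S. Mmat ch m r j} \<noteq> 1"
      using that unfolding stopping_set_def by auto
    obtain r where "r < m" "card {j\<in>S. Mmat ch m r j} = 1"
      using Q[unfolded Qp_def, rule_format, OF ss(1) ss(2) \<open>card S \<le> 3\<close>] by blast
    then show False using ss(3) by blast
  qed
  then show ?thesis unfolding decodable_def stop_dist_def
    by (auto intro!: Inf_greatest)
qed

end
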